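(* Let $N\ge2$. In the pair distinguishability task, Alice receives $x\in\{1,\dots,N\}$ uniformly at random, and Bob receives a pair $(x_1,x_2)$ with $1\le x_1<x_2\le N$ and the promise that Alice's input lies in $\{x_1,x_2\}$; Bob outputs $z\in\{1,\dots,N\}$ aiming to guess Alice's input. The success metric is $$\mathcal{S}(N)=\frac{1}{N(N-1)}\sum_{1\le x<x'\le N}\big[p(x|x,(x,x'))+p(x'|x',(x,x'))\big].$$ For a classical protocol with encoding $p_e(m|x)$ (messages $m$ from a finite set of arbitrary size) and decoding $p_d(z|y,m)$, so that $p(z|x,y)=\sum_mp_e(m|x)p_d(z|y,m)$, let $\mathcal{S}_C(N)$ be its success metric and $\mathcal{D}_C=\frac1N\sum_m\max_xp_e(m|x)$ its distinguishability. Then every classical protocol satisfies $$(N-1)\big(\mathcal{S}_C(N)-1\big)+1\le\mathcal{D}_C.$$ *)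

theory Defs
  imports Complex_Main
begin

text \<open>Messages range over a finite type 'm.
  pe x m = p_e(m|x), pd y m z = p_d(z|y,m).\<close>

definition pair_inputs :: "nat \<Rightarrow> (nat \<times> nat) set" where
  "pair_inputs N = {(x1, x2). 1 \<le> x1 \<and> x1 < x2 \<and> x2 \<le> N}"

definition classical_protocol ::
  "nat \<Rightarrow> (nat \<Rightarrow> 'm::finite \<Rightarrow> real) \<Rightarrow> (nat \<times> nat \<Rightarrow> 'm \<Rightarrow> nat \<Rightarrow> real) \<Rightarrow> bool" where
  "classical_protocol N pe pd \<longleftrightarrow>
     (\<forall>x\<in>{1..N}. (\<forall>m. pe x m \<ge> 0) \<and> (\<Sum>m\<in>UNIV. pe x m) = 1) \<and>
     (\<forall>y\<in>pair_inputs N. \<forall>m. (\<forall>z\<in>{1..N}. pd y m z \<ge> 0) \<and> (\<Sum>z\<in>{1..N}. pd y m z) = 1)"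

definition cprob ::
  "(nat \<Rightarrow> 'm::finite \<Rightarrow> real) \<Rightarrow> (nat \<times> nat \<Rightarrow> 'm \<Rightarrow> nat \<Rightarrow> real) \<Rightarrow> nat \<Rightarrow> nat \<Rightarrow> nat \<times> nat \<Rightarrow> real" where
  "cprob pe pd z x y = (\<Sum>m\<in>UNIV. pe x m * pd y m z)"

definition success_metric ::
  "nat \<Rightarrow> (nat \<Rightarrow> 'm::finite \<Rightarrow> real) \<Rightarrow> (nat \<times> nat \<Rightarrow> 'm \<Rightarrow> nat \<Rightarrow> real) \<Rightarrow> real" where
  "success_metric N pe pd =
     1 / (real N * (real N - 1)) *
     (\<Sum>(x, x')\<in>pair_inputs N. cprob pe pd x x (x, x') + cprob pe pd x' x' (x, x'))"

definition distinguishability ::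
  "nat \<Rightarrow> (nat \<Rightarrow> 'm::finite \<Rightarrow> real) \<Rightarrow> real" where
  "distinguishability N pe = 1 / real N * (\<Sum>m\<in>UNIV. Max ((\<lambda>x. pe x m) ` {1..N}))"

end

theory Submission
  imports Defs
begin

lemma pairs_Suc: "pair_inputs (Suc N) = pair_inputs N \<union> (\<lambda>x. (x, Suc N)) ` {1..N}"
  by (auto simp: pair_inputs_def)

lemma pairs_fin: "finite (pair_inputs N)"
  by (rule finite_subset[of _ "{1..N} \<times> {1..N}"]) (auto simp: pair_inputs_def)

lemma step_ineq:
  fixes a :: "nat \<Rightarrow> real"
  assumes "N \<ge> 1" "\<forall>x\<in>{1..N}. 0 \<le> a x" "0 \<le> b"
  shows "(\<Sum>x\<in>{1..N}. max (a x) b) \<le> (\<Sum>x\<in>{1..N}. a x) + (real N - 1)*b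
           + max (Max (a`{1..N})) b - Max (a`{1..N})"
proof -
  have ne: "a`{1..N} \<noteq> {}" using assms(1) by auto
  obtain k where k: "k \<in> {1..N}" "a k = Max (a`{1..N})"
    using Max_in[OF _ ne] by force
  have "(\<Sum>x\<in>{1..N}. max (a x) b) = max (a k) b + (\<Sum>x\<in>{1..N}-{k}. max (a x) b)"
    using k by (simp add: sum.remove)
  also have "(\<Sum>x\<in>{1..N}-{k}. max (a x) b) \<le> (\<Sum>x\<in>{1..N}-{k}. a x + b)"
    by (rule sum_mono) (use assms in auto)
  also have "(\<Sum>x\<in>{1..N}-{k}. a x + b) = (\<Sum>x\<in>{1..N}. a x) - a k + (real N - 1) * b"
    using k assms(1) by (simp add: sum.distrib sum_diff1 of_nat_diff)
  finally show ?thesis using k by linarith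
qed

lemma pair_ineq:
  fixes a :: "nat \<Rightarrow> real"
  assumes "N \<ge> 1" "\<forall>x\<in>{1..N}. 0 \<le> a x"
  shows "(\<Sum>(x1,x2)\<in>pair_inputs N. max (a x1) (a x2))
          \<le> (real N - 2) * (\<Sum>x\<in>{1..N}. a x) + Max (a`{1..N})"
  using assms
proof (induct N rule: nat_induct_at_least)
  case base
  have "pair_inputs 1 = {}" by (auto simp: pair_inputs_def)
  then show ?case by simp
next
  case (Suc n)
  let ?b = "a (Suc n)"
  have h: "\<forall>x\<in>{1..n}. 0 \<le> a x" using Suc.prems by auto
  have b0: "0 \<le> ?b" using Suc.prems by auto
  have IH: "(\<Sum>(x1,x2)\<in>pair_inputs n. max (a x1) (a x2))
          \<le> (real n - 2) * (\<Sum>x\<in>{1..n}. a x) + Max (a`{1..n})"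
    using Suc.hyps(2) h by blast
  have disj: "pair_inputs n \<inter> (\<lambda>x. (x, Suc n)) ` {1..n} = {}"
    by (auto simp: pair_inputs_def)
  have "(\<Sum>(x1,x2)\<in>pair_inputs (Suc n). max (a x1) (a x2))
        = (\<Sum>(x1,x2)\<in>pair_inputs n. max (a x1) (a x2)) + (\<Sum>x\<in>{1..n}. max (a x) ?b)"
  proof -
    have fi: "finite ((\<lambda>x. (x, Suc n)) ` {1..n})" by simp
    have inj: "inj_on (\<lambda>x. (x, Suc n)) {1..n}" by (simp add: inj_on_def)
    show ?thesis unfolding pairs_Suc sum.union_disjoint[OF pairs_fin fi disj]
      by (subst sum.reindex[OF inj]) (simp add: comp_def)
  qed
  moreover have "(\<Sum>x\<in>{1..n}. max (a x) ?b) \<le> (\<Sum>x\<in>{1..n}. a x) + (real n - 1)*?b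
           + max (Max (a`{1..n})) ?b - Max (a`{1..n})"
    by (rule step_ineq[OF Suc.hyps(1) h b0])
  moreover have "Max (a`{1..Suc n}) = max (Max (a`{1..n})) ?b"
  proof -
    have "a`{1..Suc n} = insert ?b (a`{1..n})" by (auto simp: atLeastAtMostSuc_conv)
    then show ?thesis using Suc.hyps(1) by (simp add: max.commute)
  qed
  moreover have "(\<Sum>x\<in>{1..Suc n}. a x) = (\<Sum>x\<in>{1..n}. a x) + ?b" by simp
  moreover have "(\<Sum>x\<in>{1..n}. a x) \<ge> 0" by (rule sum_nonneg) (use h in auto)
  moreover have "(real (Suc n) - 2) * (\<Sum>x\<in>{1..Suc n}. a x)
      = (real n - 2) * (\<Sum>x\<in>{1..n}. a x) + (\<Sum>x\<in>{1..n}. a x) + (real n - 1) * ?b"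
    by (simp add: algebra_simps)
  ultimately show ?case using IH by linarith
qed

lemma pair_term:
  assumes cp: "classical_protocol N pe pd" and y: "(x1, x2) \<in> pair_inputs N"
  shows "cprob pe pd x1 x1 (x1, x2) + cprob pe pd x2 x2 (x1, x2)
         \<le> (\<Sum>m\<in>UNIV. max (pe x1 m) (pe x2 m))"
proof -
  have x: "x1 \<in> {1..N}" "x2 \<in> {1..N}" "x1 \<noteq> x2" using y by (auto simp: pair_inputs_def)
  have pe0: "\<And>m. 0 \<le> pe x1 m" "\<And>m. 0 \<le> pe x2 m" using cp x by (auto simp: classical_protocol_def)
  have pd0: "\<And>m z. z \<in> {1..N} \<Longrightarrow> 0 \<le> pd (x1, x2) m z"
    and pd1: "\<And>m. (\<Sum>z\<in>{1..N}. pd (x1, x2) m z) = 1"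
    using cp y by (auto simp: classical_protocol_def)
  have "cprob pe pd x1 x1 (x1, x2) + cprob pe pd x2 x2 (x1, x2)
     = (\<Sum>m\<in>UNIV. pe x1 m * pd (x1, x2) m x1 + pe x2 m * pd (x1, x2) m x2)"
    by (simp add: cprob_def sum.distrib)
  also have "\<dots> \<le> (\<Sum>m\<in>UNIV. max (pe x1 m) (pe x2 m))"
  proof (rule sum_mono)
    fix m
    let ?M = "max (pe x1 m) (pe x2 m)"
    have a1: "0 \<le> pd (x1, x2) m x1" "0 \<le> pd (x1, x2) m x2" using pd0 x by auto
    have "pd (x1, x2) m x1 + pd (x1, x2) m x2 = (\<Sum>z\<in>{x1,x2}. pd (x1, x2) m z)"
      using x by simp
    also have "\<dots> \<le> (\<Sum>z\<in>{1..N}. pd (x1, x2) m z)"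
      by (rule sum_mono2) (use x pd0 in auto)
    finally have s1: "pd (x1, x2) m x1 + pd (x1, x2) m x2 \<le> 1" using pd1 by simp
    have "pe x1 m * pd (x1, x2) m x1 \<le> ?M * pd (x1, x2) m x1"
      by (rule mult_right_mono) (use a1 in auto)
    moreover have "pe x2 m * pd (x1, x2) m x2 \<le> ?M * pd (x1, x2) m x2"
      by (rule mult_right_mono) (use a1 in auto)
    moreover have "?M * (pd (x1, x2) m x1 + pd (x1, x2) m x2) \<le> ?M * 1"
      by (rule mult_left_mono[OF s1]) (metis pe0(1) max.coboundedI1)
    ultimately show "pe x1 m * pd (x1, x2) m x1 + pe x2 m * pd (x1, x2) m x2 \<le> ?M"
      by (simp add: algebra_simps)
  qed
  finally show ?thesis .
qed

theorem theorem7: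
  fixes N :: nat
    and pe :: "nat \<Rightarrow> 'm::finite \<Rightarrow> real"
    and pd :: "nat \<times> nat \<Rightarrow> 'm \<Rightarrow> nat \<Rightarrow> real"
  assumes "N \<ge> 2"
    and "classical_protocol N pe pd"
  shows "(real N - 1) * (success_metric N pe pd - 1) + 1 \<le> distinguishability N pe"
proof -
  define T where "T = (\<Sum>(x, x')\<in>pair_inputs N. cprob pe pd x x (x, x') + cprob pe pd x' x' (x, x'))"
  define SM where "SM = (\<Sum>m\<in>UNIV. Max ((\<lambda>x. pe x m) ` {1..N}))"
  have pe0: "\<And>x m. x \<in> {1..N} \<Longrightarrow> 0 \<le> pe x m"
    and pe1: "\<And>x. x \<in> {1..N} \<Longrightarrow> (\<Sum>m\<in>UNIV. pe x m) = 1"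
    using assms(2) by (auto simp: classical_protocol_def)
  have "T \<le> (\<Sum>(x1, x2)\<in>pair_inputs N. \<Sum>m\<in>UNIV. max (pe x1 m) (pe x2 m))"
    unfolding T_def by (rule sum_mono) (use pair_term[OF assms(2)] in auto)
  also have "\<dots> = (\<Sum>m\<in>UNIV. \<Sum>(x1, x2)\<in>pair_inputs N. max (pe x1 m) (pe x2 m))"
    unfolding case_prod_beta by (rule sum.swap)
  also have "\<dots> \<le> (\<Sum>m\<in>UNIV. (real N - 2) * (\<Sum>x\<in>{1..N}. pe x m) + Max ((\<lambda>x. pe x m) ` {1..N}))"
  proof (rule sum_mono)
    fix m
    show "(\<Sum>(x1, x2)\<in>pair_inputs N. max (pe x1 m) (pe x2 m))
       \<le> (real N - 2) * (\<Sum>x\<in>{1..N}. pe x m) + Max ((\<lambda>x. pe x m) ` {1..N})"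
      using pair_ineq[of N "\<lambda>x. pe x m"] assms(1) pe0 by auto
  qed
  also have "\<dots> = (real N - 2) * (\<Sum>x\<in>{1..N}. \<Sum>m\<in>UNIV. pe x m) + SM"
    unfolding SM_def by (simp add: sum.distrib sum_distrib_left sum.swap[of _ UNIV])
  also have "(\<Sum>x\<in>{1..N}. \<Sum>m\<in>UNIV. pe x m) = real N"
    using pe1 by simp
  finally have TT: "T \<le> (real N - 2) * real N + SM" .
  have N0: "real N > 1" using assms(1) by simp
  have "(real N - 1) * (success_metric N pe pd - 1) + 1 = T / real N - real N + 2"
    unfolding success_metric_def T_def[symmetric] using N0 by (simp add: field_simps)
  also have "\<dots> \<le> ((real N - 2) * real N + SM) / real N - real N + 2"
    using divide_right_mono[OF TT, of "real N"] N0 by simp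
  also have "\<dots> = SM / real N"
    using N0 by (simp add: field_simps)
  also have "\<dots> = distinguishability N pe"
    unfolding distinguishability_def SM_def by simp
  finally show ?thesis .
qed

end
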